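(* Let $x:\mathbb{R}\to\mathbb{R}$ be a $2\Omega$-bandlimited signal with $|x(t)|\le c_{\max}<\infty$. Suppose $x$ is sampled by an IF-TEM with parameters $b_{\mathrm{IF}}>c_{\max}$, $\kappa>0$, $\delta>0$, and by an AIF-TEM with the same parameters $\kappa,\delta$ and a MAP block operating successfully with some $\beta>0$. If the AIF-TEM biases satisfy $b_n\le b_{\mathrm{IF}}$ for all $n$, then $f_{s_a}\le f_{s_c}$ and $OS_a\le OS_c$.
   Context: A signal $x$ is $2\Omega$-bandlimited if its Fourier transform vanishes outside $[-\Omega,\Omega]$. An IF-TEM with parameters $b_{\mathrm{IF}},\kappa,\delta$ produces strictly increasing firing times $t_n$ with $\frac1\kappa\int_{t_{n-1}}^{t_n}(x(s)+b_{\mathrm{IF}})ds=\delta$. An AIF-TEM with parameters $\kappa,\delta$ and window size $w$ produces strictly increasing firing times $t_n$ and biases $b_n>0$ with $\frac1\kappa\int_{t_{n-1}}^{t_n}(x(s)+b_n)ds=\delta$; with $c_n=\max_{t_{n-w}\le t\le t_n}|x(t)|$, the MAP block operates successfully if $b_n\ge c_n+\beta$ for all $n$. For either sampler, $T_n=t_n-t_{n-1}$, the average sampling frequency is $f_s=1/\mathbb{E}[T_n]$ where $\mathbb{E}$ is the average over the samples, and the average oversampling is $OS=f_s\cdot\pi/\Omega$; the subscripts $a$ and $c$ refer to the AIF-TEM and IF-TEM respectively. *)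

theory Defs
  imports "HOL-Analysis.Analysis"
begin

definition fourier_transform :: "(real \<Rightarrow> real) \<Rightarrow> real \<Rightarrow> complex" where
  "fourier_transform x \<omega> = (LINT t|lborel. complex_of_real (x t) * cis (- (\<omega> * t)))"

definition bandlimited :: "real \<Rightarrow> (real \<Rightarrow> real) \<Rightarrow> bool" where
  "bandlimited \<Omega> x \<longleftrightarrow> integrable lborel x \<and>
     (\<forall>\<omega>. \<bar>\<omega>\<bar> > \<Omega> \<longrightarrow> fourier_transform x \<omega> = 0)"

definition if_tem :: "real \<Rightarrow> real \<Rightarrow> real \<Rightarrow> (real \<Rightarrow> real) \<Rightarrow> (nat \<Rightarrow> real) \<Rightarrow> bool" where
  "if_tem b \<kappa> \<delta> x t \<longleftrightarrow> strict_mono t \<and>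
     (\<forall>n\<ge>1. (1/\<kappa>) * integral {t (n-1)..t n} (\<lambda>s. x s + b) = \<delta>)"

definition aif_tem :: "real \<Rightarrow> real \<Rightarrow> (real \<Rightarrow> real) \<Rightarrow> (nat \<Rightarrow> real) \<Rightarrow> (nat \<Rightarrow> real) \<Rightarrow> bool" where
  "aif_tem \<kappa> \<delta> x t b \<longleftrightarrow> strict_mono t \<and>
     (\<forall>n\<ge>1. b n > 0 \<and> (1/\<kappa>) * integral {t (n-1)..t n} (\<lambda>s. x s + b n) = \<delta>)"

text \<open>c_n = max of |x| over [t_{n-w}, t_n] (index truncated at 0).\<close>
definition window_max :: "nat \<Rightarrow> (real \<Rightarrow> real) \<Rightarrow> (nat \<Rightarrow> real) \<Rightarrow> nat \<Rightarrow> real" where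
  "window_max w x t n = Sup ((\<lambda>s. \<bar>x s\<bar>) ` {t (n - w)..t n})"

definition map_success :: "nat \<Rightarrow> real \<Rightarrow> (real \<Rightarrow> real) \<Rightarrow> (nat \<Rightarrow> real) \<Rightarrow> (nat \<Rightarrow> real) \<Rightarrow> bool" where
  "map_success w \<beta> x t b \<longleftrightarrow> (\<forall>n\<ge>1. b n \<ge> window_max w x t n + \<beta>)"

definition avg_T :: "nat \<Rightarrow> (nat \<Rightarrow> real) \<Rightarrow> real" where
  "avg_T N t = (\<Sum>n=1..N. t n - t (n-1)) / real N"

definition samp_freq :: "nat \<Rightarrow> (nat \<Rightarrow> real) \<Rightarrow> real" where
  "samp_freq N t = 1 / avg_T N t"

definition oversampling :: "real \<Rightarrow> nat \<Rightarrow> (nat \<Rightarrow> real) \<Rightarrow> real" where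
  "oversampling \<Omega> N t = samp_freq N t * pi / \<Omega>"

end

theory Submission
  imports Defs
begin

lemma tele: fixes t :: "nat \<Rightarrow> real" shows "(\<Sum>n=1..N. t n - t (n-1)) = t N - t 0"
  by (induction N) (auto simp: sum.atLeast1_atMost_eq)

theorem theorem4:
  fixes x :: "real \<Rightarrow> real"
    and \<Omega> c_max b_IF \<kappa> \<delta> \<beta> :: real
    and w N :: nat
    and t_c t_a b :: "nat \<Rightarrow> real"
  assumes "\<Omega> > 0"
    and "bandlimited \<Omega> x"
    and "\<forall>s. \<bar>x s\<bar> \<le> c_max"
    and "b_IF > c_max" and "\<kappa> > 0" and "\<delta> > 0"
    and "if_tem b_IF \<kappa> \<delta> x t_c"
    and "aif_tem \<kappa> \<delta> x t_a b"
    and "w \<ge> 1" and "\<beta> > 0"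
    and "map_success w \<beta> x t_a b"
    and "t_a 0 = t_c 0"
    and "\<forall>n\<ge>1. b n \<le> b_IF"
    and "N \<ge> 1"
  shows "samp_freq N t_a \<le> samp_freq N t_c \<and> oversampling \<Omega> N t_a \<le> oversampling \<Omega> N t_c"
proof -
  have ix: "integrable lborel x" using assms(2) by (simp add: bandlimited_def)
  have xint: "x integrable_on {a..d}" for a d :: real
  proof -
    have "set_integrable lborel {a..d} x"
      unfolding set_integrable_def by (rule integrable_mult_indicator) (auto simp: ix)
    then show ?thesis by (rule set_borel_integral_eq_integral(1))
  qed
  have fint: "(\<lambda>s. x s + c) integrable_on {a..d}" for a d c :: real
    by (intro integrable_add xint integrable_const_ivl)
  define f where "f = (\<lambda>s. x s + b_IF)"
  have fpos: "f s \<ge> b_IF - c_max" for s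
  proof -
    have h: "\<bar>x s\<bar> \<le> c_max" using assms(3) by blast
    show ?thesis unfolding f_def using abs_le_D2[OF h] by linarith
  qed
  have fi: "f integrable_on {a..d}" for a d unfolding f_def by (rule fint)
  have lower: "integral {a..d} f \<ge> (b_IF - c_max) * (d - a)" if "a \<le> d" for a d
  proof -
    have "integral {a..d} (\<lambda>_. b_IF - c_max) \<le> integral {a..d} f"
      by (rule integral_le) (auto simp: fi fpos)
    then show ?thesis using that by (simp add: mult.commute)
  qed
  have comb: "integral {a..d} f = integral {a..c} f + integral {c..d} f" if "a \<le> c" "c \<le> d" for a c d
    using Henstock_Kurzweil_Integration.integral_combine[OF that fi] by simp
  have tc: "strict_mono t_c" and tcI: "\<forall>n\<ge>1. (1/\<kappa>) * integral {t_c (n-1)..t_c n} f = \<delta>"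
    using assms(7) by (auto simp: if_tem_def f_def)
  have ta: "strict_mono t_a" and taI: "\<forall>n\<ge>1. (1/\<kappa>) * integral {t_a (n-1)..t_a n} (\<lambda>s. x s + b n) = \<delta>"
    using assms(8) by (auto simp: aif_tem_def)
  have key: "t_c n \<le> t_a n" for n
  proof (induction n)
    case 0 then show ?case using assms(12) by simp
  next
    case (Suc n)
    define A where "A = t_a n"
    define A' where "A' = t_a (Suc n)"
    define C where "C = t_c n"
    define C' where "C' = t_c (Suc n)"
    have CA: "C \<le> A" using Suc by (simp add: A_def C_def)
    have AA: "A < A'" using ta by (simp add: A_def A'_def strict_mono_def)
    have e1: "integral {C..C'} f = \<kappa> * \<delta>" using tcI[rule_format, of "Suc n"] assms(5)
      by (simp add: C_def C'_def field_simps)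
    have e2: "integral {A..A'} (\<lambda>s. x s + b (Suc n)) = \<kappa> * \<delta>" using taI[rule_format, of "Suc n"] assms(5)
      by (simp add: A_def A'_def field_simps)
    have le2: "integral {A..A'} (\<lambda>s. x s + b (Suc n)) \<le> integral {A..A'} f"
      by (rule integral_le) (auto simp: fint fi f_def assms(13))
    show ?case
    proof (rule ccontr)
      assume "\<not> ?case"
      then have AC: "A' < C'" by (simp add: A'_def C'_def)
      have "integral {C..C'} f = integral {C..A} f + integral {A..A'} f + integral {A'..C'} f"
        using comb[of C A C'] comb[of A A' C'] CA AA AC by simp
      moreover have "integral {C..A} f \<ge> 0" using lower[OF CA] CA assms(4) by (smt (verit) mult_nonneg_nonneg)
      moreover have "integral {A'..C'} f > 0" using lower[of A' C'] AC assms(4)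
        by (smt (verit) mult_pos_pos)
      ultimately show False using e1 e2 le2 by linarith
    qed
  qed
  have pos: "t_c N - t_c 0 > 0" using tc assms(14) by (simp add: strict_mono_def)
  have avg: "avg_T N t_c \<le> avg_T N t_a" "avg_T N t_c > 0"
    unfolding avg_T_def tele using key[of N] assms(12) pos assms(14)
    by (auto intro!: divide_right_mono)
  then have sf: "samp_freq N t_a \<le> samp_freq N t_c" unfolding samp_freq_def
    by (simp add: frac_le)
  moreover have "oversampling \<Omega> N t_a \<le> oversampling \<Omega> N t_c" unfolding oversampling_def
    using sf assms(1) by (simp add: divide_right_mono)
  ultimately show ?thesis ..
qed

end
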